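(* Let $d\ge2$ and, for each $N$, let $x_1,\dots,x_N\in\mathbb{R}^d$ be pairwise distinct with real charges $d_1,\dots,d_N$ (not all zero), $M_N=\sum|d_i|$, and $\mu_N=\frac1{M_N}\sum_id_i\delta_{x_i}$. Assume $$\sup_N\Big[\frac1{2M_N^2}\sum_{i=1}^N\sum_{j\ne i}|d_i||d_j|\big(g(x_i-x_j)+|F(x_i-x_j)|\big)+\frac1{M_N}\sum_{i=1}^N|d_i|V(x_i)\Big]<+\infty.$$ Then $(\mu_N)_N$ is tight.
   Context: $g(x)=-\log|x|$ ($d=2$), $g(x)=|x|^{2-d}$ ($d\ge3$). $F\in C^1(\mathbb{R}^d)$ with $F(-x)=F(x)$; $V\in C^1(\mathbb{R}^d)$ bounded from below with $\lim_{|x|\to\infty}(V(x)/2+g(x))=+\infty$. A family of signed measures is tight if for every $\varepsilon>0$ there is a compact $K$ with $\sup_N|\mu_N|(\mathbb{R}^d\setminus K)<\varepsilon$, $|\mu|$ the variation measure. *)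

theory Defs
  imports "HOL-Analysis.Analysis"
begin

definition kernel_g :: "'a::euclidean_space \<Rightarrow> real" where
  "kernel_g x = (if DIM('a) = 2 then - ln (norm x) else norm x powr (2 - real DIM('a)))"

definition C1_fun :: "('a::euclidean_space \<Rightarrow> real) \<Rightarrow> bool" where
  "C1_fun f \<longleftrightarrow> (\<exists>f' :: 'a \<Rightarrow> ('a \<Rightarrow>\<^sub>L real).
      (\<forall>x. (f has_derivative blinfun_apply (f' x)) (at x)) \<and> continuous_on UNIV f')"

definition mass :: "(nat \<Rightarrow> real) \<Rightarrow> nat \<Rightarrow> real" where
  "mass dc N = (\<Sum>i\<in>{1..N}. \<bar>dc i\<bar>)"

text \<open>Variation measure |mu_N|(A) of mu_N = (1/M_N) sum_i d_i delta_{x_i}, for pairwise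
  distinct points x_i: it equals (1/M_N) sum of |d_i| over those i with x_i in A.\<close>
definition var_measure :: "nat \<Rightarrow> (nat \<Rightarrow> 'a) \<Rightarrow> (nat \<Rightarrow> real) \<Rightarrow> 'a set \<Rightarrow> real" where
  "var_measure N x dc A = (\<Sum>i\<in>{i\<in>{1..N}. x i \<in> A}. \<bar>dc i\<bar>) / mass dc N"

definition energy :: "('a::euclidean_space \<Rightarrow> real) \<Rightarrow> ('a \<Rightarrow> real) \<Rightarrow> nat \<Rightarrow> (nat \<Rightarrow> 'a) \<Rightarrow> (nat \<Rightarrow> real) \<Rightarrow> real" where
  "energy F V N x dc =
     1 / (2 * (mass dc N)\<^sup>2) * (\<Sum>i\<in>{1..N}. \<Sum>j\<in>{1..N} - {i}.
        \<bar>dc i\<bar> * \<bar>dc j\<bar> * (kernel_g (x i - x j) + \<bar>F (x i - x j)\<bar>))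
     + 1 / mass dc N * (\<Sum>i\<in>{1..N}. \<bar>dc i\<bar> * V (x i))"

end

theory Submission
  imports Defs
begin

definition LL :: "'a::euclidean_space \<Rightarrow> real" where
  "LL y = (if DIM('a) = 2 then ln (1 + norm y) else 0)"

lemma LL_nonneg: "LL y \<ge> 0"
  unfolding LL_def by auto

lemma kernel_lower:
  fixes a b :: "'a::euclidean_space"
  assumes "a \<noteq> b"
  shows "kernel_g (a - b) \<ge> - (LL a + LL b)"
proof (cases "DIM('a) = 2")
  case True
  have pos: "norm (a - b) > 0" using assms by simp
  have "norm (a - b) \<le> norm a + norm b" by (rule norm_triangle_ineq4)
  also have "\<dots> \<le> (1 + norm a) * (1 + norm b)"
    by (simp add: algebra_simps)
  finally have le: "norm (a - b) \<le> (1 + norm a) * (1 + norm b)" .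
  have pa: "1 + norm a > 0" using norm_ge_zero[of a] by linarith
  have pb: "1 + norm b > 0" using norm_ge_zero[of b] by linarith
  have "ln (norm (a - b)) \<le> ln ((1 + norm a) * (1 + norm b))"
  proof -
    from pa pb have pp: "(1 + norm a) * (1 + norm b) > 0" by simp
    show ?thesis using le pos pp by (subst ln_le_cancel_iff) auto
  qed
  also have "\<dots> = ln (1 + norm a) + ln (1 + norm b)"
    using pa pb by (rule ln_mult_pos)
  finally show ?thesis using True unfolding kernel_g_def LL_def by simp
next
  case False
  then show ?thesis unfolding kernel_g_def LL_def by simp
qed

lemma energy_lower:
  fixes xs :: "nat \<Rightarrow> 'a::euclidean_space" and ds :: "nat \<Rightarrow> real"
    and F V :: "'a \<Rightarrow> real"
  assumes M: "mass ds N > 0"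
    and dist: "\<And>i j. i \<in> {1..N} \<Longrightarrow> j \<in> {1..N} \<Longrightarrow> i \<noteq> j \<Longrightarrow> xs i \<noteq> xs j"
  shows "energy F V N xs ds \<ge> (\<Sum>i\<in>{1..N}. \<bar>ds i\<bar> * (V (xs i) - LL (xs i))) / mass ds N"
proof -
  define M where "M = mass ds N"
  define a where "a = (\<lambda>i. \<bar>ds i\<bar>)"
  define L where "L = (\<lambda>i. LL (xs i))"
  define P where "P = (\<Sum>j\<in>{1..N}. a j * L j)"
  have Mdef: "M = (\<Sum>j\<in>{1..N}. a j)" unfolding M_def a_def mass_def by simp
  have Mpos: "M > 0" using M M_def by simp
  have a0: "a i \<ge> 0" for i unfolding a_def by simp
  have L0: "L i \<ge> 0" for i unfolding L_def by (rule LL_nonneg)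
  define S2 where "S2 = (\<Sum>i\<in>{1..N}. \<Sum>j\<in>{1..N} - {i}.
        a i * a j * (kernel_g (xs i - xs j) + \<bar>F (xs i - xs j)\<bar>))"
  define S1 where "S1 = (\<Sum>i\<in>{1..N}. a i * V (xs i))"
  have inner: "(\<Sum>j\<in>{1..N} - {i}. a i * a j * (kernel_g (xs i - xs j) + \<bar>F (xs i - xs j)\<bar>))
      \<ge> - (a i * (M * L i + P))" if i: "i \<in> {1..N}" for i
  proof -
    have "(\<Sum>j\<in>{1..N} - {i}. - (a i * a j * (L i + L j)))
        \<le> (\<Sum>j\<in>{1..N} - {i}. a i * a j * (kernel_g (xs i - xs j) + \<bar>F (xs i - xs j)\<bar>))"
    proof (rule sum_mono)
      fix j assume j: "j \<in> {1..N} - {i}"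
      have "kernel_g (xs i - xs j) \<ge> - (LL (xs i) + LL (xs j))"
        using kernel_lower dist i j by auto
      hence "kernel_g (xs i - xs j) + \<bar>F (xs i - xs j)\<bar> \<ge> - (L i + L j)"
        unfolding L_def by linarith
      hence "a i * a j * (kernel_g (xs i - xs j) + \<bar>F (xs i - xs j)\<bar>) \<ge> a i * a j * (- (L i + L j))"
        by (intro mult_left_mono) (auto simp: a0)
      thus "- (a i * a j * (L i + L j)) \<le> a i * a j * (kernel_g (xs i - xs j) + \<bar>F (xs i - xs j)\<bar>)"
        by (simp add: algebra_simps)
    qed
    moreover have "(\<Sum>j\<in>{1..N}. - (a i * a j * (L i + L j)))
        = (\<Sum>j\<in>{1..N} - {i}. - (a i * a j * (L i + L j))) + (- (a i * a i * (L i + L i)))"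
      using sum.subset_diff[of "{i}" "{1..N}" "\<lambda>j. - (a i * a j * (L i + L j))"] i by simp
    moreover have "a i * a i * (L i + L i) \<ge> 0" using a0 L0 by simp
    moreover have "(\<Sum>j\<in>{1..N}. - (a i * a j * (L i + L j))) = - (a i * (M * L i + P))"
    proof -
      have "(\<Sum>j\<in>{1..N}. a i * a j * (L i + L j))
          = (\<Sum>j\<in>{1..N}. (a i * L i) * a j + a i * (a j * L j))"
        by (rule sum.cong) (auto simp: algebra_simps)
      also have "\<dots> = (a i * L i) * M + a i * P"
        unfolding Mdef P_def by (simp add: sum.distrib sum_distrib_left)
      finally have eq: "(\<Sum>j\<in>{1..N}. a i * a j * (L i + L j)) = (a i * L i) * M + a i * P" .
      show ?thesis by (simp only: sum_negf eq) (simp add: algebra_simps)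
    qed
    ultimately show ?thesis by linarith
  qed
  have "S2 \<ge> (\<Sum>i\<in>{1..N}. - (a i * (M * L i + P)))"
    unfolding S2_def by (rule sum_mono) (rule inner)
  also have "(\<Sum>i\<in>{1..N}. - (a i * (M * L i + P))) = - (2 * M * P)"
  proof -
    have "(\<Sum>i\<in>{1..N}. a i * (M * L i + P)) = (\<Sum>i\<in>{1..N}. M * (a i * L i) + P * a i)"
      by (rule sum.cong) (auto simp: algebra_simps)
    also have "\<dots> = M * P + P * M"
      unfolding P_def Mdef by (simp add: sum.distrib sum_distrib_left)
    finally have eq: "(\<Sum>i\<in>{1..N}. a i * (M * L i + P)) = M * P + P * M" .
    show ?thesis by (simp only: sum_negf eq) (simp add: algebra_simps)
  qed
  finally have S2b: "S2 \<ge> - (2 * M * P)" .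
  have en: "energy F V N xs ds = S2 / (2 * M^2) + S1 / M"
    unfolding energy_def S2_def S1_def M_def a_def by simp
  have "S2 / (2 * M^2) \<ge> - (2 * M * P) / (2 * M^2)"
    using S2b Mpos by (intro divide_right_mono) auto
  also have "- (2 * M * P) / (2 * M^2) = - P / M" using Mpos by (simp add: power2_eq_square)
  finally have "energy F V N xs ds \<ge> - P / M + S1 / M" using en by linarith
  also have "- P / M + S1 / M = (\<Sum>i\<in>{1..N}. \<bar>ds i\<bar> * (V (xs i) - LL (xs i))) / mass ds N"
    unfolding P_def S1_def M_def a_def L_def
    by (simp add: add_divide_distrib[symmetric] sum_subtractf algebra_simps)
  finally show ?thesis .
qed

lemma h_tail:
  fixes V :: "'a::euclidean_space \<Rightarrow> real"
  assumes dim: "DIM('a) \<ge> 2"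
    and V_lim: "filterlim (\<lambda>y. V y / 2 + kernel_g y) at_top at_infinity"
  shows "\<exists>r. \<forall>y. norm y > r \<longrightarrow> V y - LL y \<ge> R"
proof -
  have "eventually (\<lambda>y. V y / 2 + kernel_g y \<ge> R / 2 + 1) at_infinity"
    using V_lim by (simp add: filterlim_at_top)
  then obtain b where b: "\<And>y. b \<le> norm y \<Longrightarrow> V y / 2 + kernel_g y \<ge> R / 2 + 1"
    unfolding eventually_at_infinity by blast
  show ?thesis
  proof (intro exI allI impI)
    fix y :: 'a assume y: "norm y > max b 2"
    have vb: "V y / 2 + kernel_g y \<ge> R / 2 + 1" using b y by auto
    show "V y - LL y \<ge> R"
    proof (cases "DIM('a) = 2")
      case True
      have n2: "norm y \<ge> 2" using y by auto
      have "norm y * norm y \<ge> 2 * norm y" using n2 by (intro mult_right_mono) auto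
      hence "1 + norm y \<le> norm y * norm y" using n2 by linarith
      hence "ln (1 + norm y) \<le> ln (norm y * norm y)"
        using n2 by (subst ln_le_cancel_iff) auto
      also have "\<dots> = 2 * ln (norm y)" using n2 by (subst ln_mult_pos) auto
      finally have "ln (1 + norm y) \<le> 2 * ln (norm y)" .
      moreover have "kernel_g y = - ln (norm y)" using True unfolding kernel_g_def by simp
      moreover have "LL y = ln (1 + norm y)" using True unfolding LL_def by simp
      ultimately show ?thesis using vb by linarith
    next
      case False
      have n1: "norm y \<ge> 1" using y by auto
      have "kernel_g y = norm y powr (2 - real DIM('a))" using False unfolding kernel_g_def by simp
      also have "\<dots> \<le> norm y powr 0"
        using n1 dim by (intro powr_mono) auto
      also have "\<dots> = 1" using n1 by (auto simp: powr_0)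
      finally have "kernel_g y \<le> 1" .
      moreover have "LL y = 0" using False unfolding LL_def by simp
      ultimately show ?thesis using vb by linarith
    qed
  qed
qed


theorem lemma3p1:
  fixes F V :: "'a::euclidean_space \<Rightarrow> real"
    and x :: "nat \<Rightarrow> nat \<Rightarrow> 'a" and dc :: "nat \<Rightarrow> nat \<Rightarrow> real"
  assumes dim: "DIM('a) \<ge> 2"
    and F_C1: "C1_fun F" and F_even: "\<And>y. F (- y) = F y"
    and V_C1: "C1_fun V" and V_below: "bdd_below (range V)"
    and V_lim: "filterlim (\<lambda>y. V y / 2 + kernel_g y) at_top at_infinity"
    and distinct: "\<And>N i j. N \<ge> 1 \<Longrightarrow> i \<in> {1..N} \<Longrightarrow> j \<in> {1..N} \<Longrightarrow> i \<noteq> j \<Longrightarrow> x N i \<noteq> x N j"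
    and nonzero: "\<And>N. N \<ge> 1 \<Longrightarrow> \<exists>i\<in>{1..N}. dc N i \<noteq> 0"
    and bounded: "bdd_above ((\<lambda>N. energy F V N (x N) (dc N)) ` {1..})"
  shows "\<forall>\<epsilon>>0. \<exists>K. compact K \<and>
           (SUP N\<in>{1..}. var_measure N (x N) (dc N) (UNIV - K)) < \<epsilon>"
proof (intro allI impI)
  fix \<epsilon> :: real assume ep: "\<epsilon> > 0"
  obtain C where C: "\<And>N. N \<ge> 1 \<Longrightarrow> energy F V N (x N) (dc N) \<le> C"
    using bounded unfolding bdd_above_def by auto
  obtain B0 where B0: "\<And>y. B0 \<le> V y"
    using V_below unfolding bdd_below_def by auto
  obtain r0 where r0: "\<And>y. norm y > r0 \<Longrightarrow> V y - LL y \<ge> 0"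
    using h_tail[OF dim V_lim, of 0] by blast
  define B where "B = max 0 (ln (1 + max 0 r0) - B0)"
  have B0le: "B \<ge> 0" unfolding B_def by simp
  have hB: "V y - LL y \<ge> - B" for y
  proof (cases "norm y > r0")
    case True then show ?thesis using r0 B0le by force
  next
    case False
    have "LL y \<le> ln (1 + max 0 r0)"
      unfolding LL_def using False by (auto simp: ln_le_cancel_iff add_pos_nonneg)
    then show ?thesis using B0[of y] unfolding B_def by linarith
  qed
  define R where "R = 2 * (\<bar>C\<bar> + B + 1) / \<epsilon>"
  have Rpos: "R > 0" unfolding R_def using ep B0le by simp
  obtain r where r: "\<And>y. norm y > r \<Longrightarrow> V y - LL y \<ge> R"
    using h_tail[OF dim V_lim, of R] by blast
  have each: "var_measure N (x N) (dc N) (UNIV - cball 0 r) \<le> \<epsilon> / 2" if N: "N \<ge> 1" for N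
  proof -
    define a where "a = (\<lambda>i. \<bar>dc N i\<bar>)"
    define h where "h = (\<lambda>i. V (x N i) - LL (x N i))"
    define out where "out = (\<lambda>i. x N i \<in> UNIV - cball 0 r)"
    define M where "M = mass (dc N) N"
    have Mdef: "M = (\<Sum>i\<in>{1..N}. a i)" unfolding M_def a_def mass_def by simp
    obtain i0 where i0: "i0 \<in> {1..N}" "dc N i0 \<noteq> 0" using nonzero[OF N] by blast
    have "a i0 \<le> M" unfolding Mdef by (rule member_le_sum) (use i0 in \<open>auto simp: a_def\<close>)
    moreover have "a i0 > 0" using i0 unfolding a_def by simp
    ultimately have Mpos: "M > 0" by linarith
    have el: "energy F V N (x N) (dc N) \<ge> (\<Sum>i\<in>{1..N}. a i * h i) / M"
      unfolding a_def h_def M_def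
      by (rule energy_lower) (use Mpos M_def distinct N in auto)
    hence "(\<Sum>i\<in>{1..N}. a i * h i) / M \<le> C" using C[OF N] by linarith
    hence up: "(\<Sum>i\<in>{1..N}. a i * h i) \<le> C * M" using Mpos by (simp add: divide_le_eq)
    define Sout where "Sout = (\<Sum>i\<in>{i\<in>{1..N}. out i}. a i)"
    have Sout_eq: "Sout = (\<Sum>i\<in>{1..N}. if out i then a i else 0)"
      unfolding Sout_def by (rule sum.inter_filter) simp
    have "(\<Sum>i\<in>{1..N}. (if out i then R * a i else 0) - B * a i) \<le> (\<Sum>i\<in>{1..N}. a i * h i)"
    proof (rule sum_mono)
      fix i assume "i \<in> {1..N}"
      have a0: "a i \<ge> 0" unfolding a_def by simp
      show "(if out i then R * a i else 0) - B * a i \<le> a i * h i"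
      proof (cases "out i")
        case True
        hence "h i \<ge> R" unfolding h_def out_def using r by auto
        hence "a i * h i \<ge> a i * R" using a0 by (intro mult_left_mono)
        then show ?thesis using True a0 B0le by (simp add: algebra_simps)
          (smt (verit) mult_nonneg_nonneg)
      next
        case False
        have "a i * h i \<ge> a i * (- B)" using a0 hB unfolding h_def by (intro mult_left_mono) auto
        then show ?thesis using False by (simp add: mult.commute)
      qed
    qed
    moreover have "(\<Sum>i\<in>{1..N}. (if out i then R * a i else 0) - B * a i) = R * Sout - B * M"
    proof -
      have "(\<Sum>i\<in>{1..N}. (if out i then R * a i else 0)) = R * Sout"
        unfolding Sout_eq sum_distrib_left by (rule sum.cong) auto
      then show ?thesis unfolding Mdef by (simp add: sum_subtractf sum_distrib_left)
    qed
    ultimately have "R * Sout - B * M \<le> C * M" using up by linarith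
    hence "R * Sout \<le> (C + B) * M" by (simp add: algebra_simps)
    also have "\<dots> \<le> (\<bar>C\<bar> + B + 1) * M" using Mpos by (intro mult_right_mono) auto
    finally have "R * Sout \<le> (\<bar>C\<bar> + B + 1) * M" .
    hence "R * (Sout / M) \<le> \<bar>C\<bar> + B + 1" using Mpos by (simp add: field_simps)
    hence "Sout / M \<le> (\<bar>C\<bar> + B + 1) / R" using Rpos by (simp add: field_simps)
    also have "\<dots> = \<epsilon> / 2" unfolding R_def using ep B0le
      by (simp add: field_simps)
    finally have "Sout / M \<le> \<epsilon> / 2" .
    moreover have "var_measure N (x N) (dc N) (UNIV - cball 0 r) = Sout / M"
      unfolding var_measure_def Sout_def M_def out_def a_def by simp
    ultimately show ?thesis by simp
  qed
  have "(SUP N\<in>{1..}. var_measure N (x N) (dc N) (UNIV - cball 0 r)) \<le> \<epsilon> / 2"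
    by (rule cSUP_least) (use each in auto)
  then show "\<exists>K. compact K \<and> (SUP N\<in>{1..}. var_measure N (x N) (dc N) (UNIV - K)) < \<epsilon>"
    using ep by (intro exI[of _ "cball 0 r"]) auto
qed

end
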